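(* With $\mathcal{A}$ as in the context, let $n=\log_2(\alpha n_t n_x^\alpha)$ and $\Pi=\mathcal{A}\mathcal{A}^T$. Then $\Pi=\bigotimes_{m=1}^{n}\pi_m$ with each $\pi_m\in\{\rho_0,\rho_3,I_2\}$ (so $\Pi$ is a diagonal $0/1$ matrix), and the matrix $$U_1=\begin{pmatrix}I-\Pi&\Pi\\ \Pi&I-\Pi\end{pmatrix}=\sigma_x\otimes\Pi+I_2\otimes(I-\Pi)$$ is a single multi-controlled NOT gate $C^qX$: it applies $\sigma_x$ to the first (ancilla) qubit conditioned on each qubit $m$ with $\pi_m=\rho_0$ being in state $|0\rangle$ and each qubit $m$ with $\pi_m=\rho_3$ being in state $|1\rangle$, where the number of controls $q=\#\{m:\pi_m\neq I_2\}$ satisfies $q\le\log_2(\alpha n_t n_x^\alpha)$.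
   Context: Single-qubit matrices: $\rho_0=|0\rangle\langle0|$, $\rho_1=|0\rangle\langle1|$, $\rho_2=|1\rangle\langle0|$, $\rho_3=|1\rangle\langle1|$, $\rho_4=I_2$; $\sigma_x$ is the Pauli-X matrix. For $n$ a power of 2, $I_n=I_2^{\otimes\log_2 n}$. Basis convention: index with binary expansion $b_{m-1}\cdots b_0$ corresponds to $|b_{m-1}\rangle\otimes\cdots\otimes|b_0\rangle$. The commutation matrix $K^{(a,b)}$ is the $ab\times ab$ permutation matrix with $K^{(a,b)}(x\otimes y)=y\otimes x$ for $x\in\mathbb{C}^b$, $y\in\mathbb{C}^a$. Standing data: $\alpha,n_t$ powers of 2, $n_x=2^s$ ($s\ge1$), integers $1\le j\le\alpha-1$, $0\le l\le j-1$; $Q_1=\log_2(\alpha n_t n_x^{\alpha}/n_x^{j+1})$; $r_0,\dots,r_{Q_1-1}\in\{0,\dots,4\}$; $P$ a real $n_x^2\times n_x^2$ permutation matrix (in the paper one of two specific permutations $P^\pm$); $\mathcal{D}=\rho_0^{\otimes s}\otimes I_{n_x}$; $$\mathcal{A}=\Bigl(\bigotimes_{k=0}^{Q_1-1}\rho_{r_k}\Bigr)\otimes\Bigl[\bigl(\rho_0^{\otimes s}\otimes K^{(n_x^l,n_x)}\bigr)\bigl(\mathcal{D}P\otimes I_{n_x^l}\bigr)K^{(n_x^2,n_x^l)}\Bigr]\otimes I_{n_x^{j-l-1}}.$$ $U_1$ acts on one ancilla qubit (first tensor factor) together with the $n$ qubits on which $\mathcal{A}$ acts. *)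

theory Defs
  imports "Jordan_Normal_Form.Matrix" "HOL-Combinatorics.Permutations"
begin

(* Kronecker (tensor) product; the first factor is the most significant one,
   matching the basis convention |b_{m-1}> (x) ... (x) |b_0>. *)
definition kron :: "real mat \<Rightarrow> real mat \<Rightarrow> real mat" where
  "kron A B = mat (dim_row A * dim_row B) (dim_col A * dim_col B)
     (\<lambda>(i, j). A $$ (i div dim_row B, j div dim_col B) * B $$ (i mod dim_row B, j mod dim_col B))"

definition kron_list :: "real mat list \<Rightarrow> real mat" where
  "kron_list Ms = foldr kron Ms (1\<^sub>m 1)"

definition kron_pow :: "real mat \<Rightarrow> nat \<Rightarrow> real mat" where
  "kron_pow A k = kron_list (replicate k A)"

(* rho_0 = |0><0|, rho_1 = |0><1|, rho_2 = |1><0|, rho_3 = |1><1|, rho_4 = I_2 *)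
definition rho :: "nat \<Rightarrow> real mat" where
  "rho r = (if r = 4 then 1\<^sub>m 2 else
     mat 2 2 (\<lambda>(i, j). if (i, j) = (r div 2, r mod 2) then 1 else 0))"

definition sigma_x :: "real mat" where
  "sigma_x = mat 2 2 (\<lambda>(i, j). if i \<noteq> j then 1 else 0)"

(* commutation matrix K^(a,b): ab x ab, K (x (x) y) = y (x) x for x in C^b, y in C^a *)
definition commutation_mat :: "nat \<Rightarrow> nat \<Rightarrow> real mat" where
  "commutation_mat a b = mat (a * b) (a * b)
     (\<lambda>(r, c). if c = (r mod b) * a + r div b then 1 else 0)"

definition is_perm_mat :: "nat \<Rightarrow> real mat \<Rightarrow> bool" where
  "is_perm_mat N P \<longleftrightarrow> (\<exists>p. p permutes {..<N} \<and>
      P = mat N N (\<lambda>(i, j). if j = p i then 1 else 0))"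

definition A_mat :: "nat \<Rightarrow> nat \<Rightarrow> nat \<Rightarrow> nat \<Rightarrow> nat list \<Rightarrow> real mat \<Rightarrow> real mat" where
  "A_mat s n_x j l rs P =
     (let D = kron (kron_pow (rho 0) s) (1\<^sub>m n_x);
          M = kron (kron_pow (rho 0) s) (commutation_mat (n_x ^ l) n_x)
              * kron (D * P) (1\<^sub>m (n_x ^ l))
              * commutation_mat (n_x ^ 2) (n_x ^ l)
      in kron (kron (kron_list (map rho rs)) M) (1\<^sub>m (n_x ^ (j - l - 1))))"

definition U1_mat :: "real mat \<Rightarrow> real mat" where
  "U1_mat Proj = (let N = dim_row Proj in
     four_block_mat (1\<^sub>m N - Proj) Proj Proj (1\<^sub>m N - Proj))"

(* Multi-controlled NOT on 1 + n qubits: the ancilla is the first tensor factor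
   (most significant bit of the index), data qubits m = 1..n follow, qubit m being
   bit (n - m) of the data index. ctrl m = Some v: qubit m must be in state |v>;
   ctrl m = None: qubit m is not a control. sigma_x is applied to the ancilla iff all
   control conditions hold. *)
definition mcx_gate :: "nat \<Rightarrow> (nat \<Rightarrow> nat option) \<Rightarrow> real mat" where
  "mcx_gate n ctrl = mat (2 * 2 ^ n) (2 * 2 ^ n) (\<lambda>(i, j).
     (let a = i div 2 ^ n; x = i mod 2 ^ n; b = j div 2 ^ n; y = j mod 2 ^ n;
          fire = (\<forall>m\<in>{1..n}. case ctrl m of None \<Rightarrow> True
                                 | Some v \<Rightarrow> (x div 2 ^ (n - m)) mod 2 = v)
      in if x \<noteq> y then 0
         else if fire then (if a \<noteq> b then 1 else 0)
         else (if a = b then 1 else 0)))"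

(* controls determined by the factors pi_1..pi_n (list index m-1 holds pi_m, given as
   rho-index: 0 = rho_0, 3 = rho_3, 4 = I_2) *)
definition controls_of :: "nat list \<Rightarrow> nat \<Rightarrow> nat option" where
  "controls_of pis m = (if pis ! (m - 1) = 0 then Some 0
                        else if pis ! (m - 1) = 3 then Some 1 else None)"

end

theory Submission
  imports Defs
begin


lemma kron_carrier[simp]: "dim_row (kron A B) = dim_row A * dim_row B" "dim_col (kron A B) = dim_col A * dim_col B"
  by (auto simp: kron_def)

lemma kron_carrier_mat: "A \<in> carrier_mat a b \<Longrightarrow> B \<in> carrier_mat c d \<Longrightarrow> kron A B \<in> carrier_mat (a*c) (b*d)"
  by (intro carrier_matI) auto

lemma kron_index: "i < dim_row A * dim_row B \<Longrightarrow> j < dim_col A * dim_col B \<Longrightarrow>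
  kron A B $$ (i,j) = A $$ (i div dim_row B, j div dim_col B) * B $$ (i mod dim_row B, j mod dim_col B)"
  by (auto simp: kron_def)

lemma dm_bound: "(i::nat) < a * b \<Longrightarrow> i div b < a \<and> i mod b < b"
proof -
  assume h: "i < a * b"
  then have "b > 0" by (cases b) auto
  then show ?thesis using h by (simp add: less_mult_imp_div_less)
qed

lemma sum_div_mod:
  fixes g :: "nat \<Rightarrow> nat \<Rightarrow> real"
  assumes "d > 0"
  shows "(\<Sum>t\<in>{0..<b*d}. g (t div d) (t mod d)) = (\<Sum>t1\<in>{0..<b}. \<Sum>t2\<in>{0..<d}. g t1 t2)"
proof -
  have "(\<Sum>t\<in>{0..<b*d}. g (t div d) (t mod d)) = (\<Sum>p\<in>{0..<b}\<times>{0..<d}. g (fst p) (snd p))"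
  proof (rule sum.reindex_bij_witness[where i="\<lambda>p. fst p * d + snd p" and j="\<lambda>t. (t div d, t mod d)"])
    fix p assume "p \<in> {0..<b}\<times>{0..<d}"
    then obtain t1 t2 where p: "p = (t1,t2)" "t1 < b" "t2 < d" by auto
    have e1: "(t1 + 1) * d \<le> b * d" using p(2) by (intro mult_le_mono1) simp
    have e2: "(t1 + 1) * d = t1 * d + d" by (rule trans[OF add_mult_distrib]) simp
    have "t1 * d + t2 < b * d" using e1 e2 p(3) by linarith
    then show "fst p * d + snd p \<in> {0..<b*d}" using p by simp
    have e3: "(t2 + t1 * d) div d = t1" using div_mult_self1[of d t2 t1] assms p(3) by simp
    have e4: "(t2 + t1 * d) mod d = t2" using mod_mult_self1[of t2 t1 d] p(3) by simp
    show "((fst p * d + snd p) div d, (fst p * d + snd p) mod d) = p"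
      unfolding p(1) fst_conv snd_conv add.commute[of "t1*d" t2] e3 e4 by (rule refl)
  next
    fix t assume "t \<in> {0..<b*d}"
    then have "t < b * d" by (simp only: atLeastLessThan_iff)
    then have "t div d < b \<and> t mod d < d" by (rule dm_bound)
    then show "(t div d, t mod d) \<in> {0..<b}\<times>{0..<d}"
      by (simp only: mem_Times_iff atLeastLessThan_iff fst_conv snd_conv zero_le simp_thms)
    show "fst (t div d, t mod d) * d + snd (t div d, t mod d) = t" by simp
    show "g (fst (t div d, t mod d)) (snd (t div d, t mod d)) = g (t div d) (t mod d)" by simp
  qed
  also have "\<dots> = (\<Sum>t1\<in>{0..<b}. \<Sum>t2\<in>{0..<d}. g t1 t2)"
    by (simp add: sum.cartesian_product split_def)
  finally show ?thesis .
qed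

lemma kron_mult:
  assumes A: "A \<in> carrier_mat a b" and B: "B \<in> carrier_mat c d" and C: "C \<in> carrier_mat b e"
    and D: "D \<in> carrier_mat d f" and d: "d > 0"
  shows "kron A B * kron C D = kron (A * C) (B * D)"
proof (rule eq_matI)
  fix i k assume i: "i < dim_row (kron (A * C) (B * D))" and k: "k < dim_col (kron (A * C) (B * D))"
  have ic: "i div c < a" "i mod c < c" using i A B C D
    using dm_bound by auto
  have kf: "k div f < e" "k mod f < f" using k A B C D
    using dm_bound by auto
  have "(kron A B * kron C D) $$ (i,k) = (\<Sum>t\<in>{0..<b*d}. kron A B $$ (i,t) * kron C D $$ (t,k))"
    using i k A B C D by (simp add: scalar_prod_def)
  also have "\<dots> = (\<Sum>t\<in>{0..<b*d}. (\<lambda>t1 t2. A $$ (i div c, t1) * B $$ (i mod c, t2) * (C $$ (t1, k div f) * D $$ (t2, k mod f))) (t div d) (t mod d))"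
  proof (rule sum.cong[OF refl])
    fix t assume t: "t \<in> {0..<b*d}"
    show "kron A B $$ (i,t) * kron C D $$ (t,k) = (\<lambda>t1 t2. A $$ (i div c, t1) * B $$ (i mod c, t2) * (C $$ (t1, k div f) * D $$ (t2, k mod f))) (t div d) (t mod d)"
      using i k t A B C D by (simp add: kron_index)
  qed
  also have "\<dots> = (\<Sum>t1\<in>{0..<b}. \<Sum>t2\<in>{0..<d}. A $$ (i div c, t1) * B $$ (i mod c, t2) * (C $$ (t1, k div f) * D $$ (t2, k mod f)))"
    by (rule sum_div_mod[OF d])
  also have "\<dots> = (\<Sum>t1\<in>{0..<b}. A $$ (i div c, t1) * C $$ (t1, k div f)) * (\<Sum>t2\<in>{0..<d}. B $$ (i mod c, t2) * D $$ (t2, k mod f))"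
    by (simp add: sum_product mult_ac)
  also have "\<dots> = kron (A * C) (B * D) $$ (i,k)"
    using i k A B C D ic kf by (simp add: kron_index scalar_prod_def)
  finally show "(kron A B * kron C D) $$ (i,k) = kron (A * C) (B * D) $$ (i,k)" .
qed (use A B C D in auto)

lemma mod_mult_div: "((i::nat) mod (b * c)) div c = i div c mod b"
proof (cases "c = 0")
  case False
  have "i mod (b * c) = c * (i div c mod b) + i mod c"
    using mod_mult2_eq[of i c b] by (simp add: mult.commute)
  then show ?thesis using False by simp
qed simp

lemma div_mult2': "(i::nat) div (b * c) = i div c div b"
  using div_mult2_eq[of i c b] by (simp add: mult.commute)

lemma mod_mult_mod: "(i::nat) mod (b * c) mod c = i mod c"
  by (simp add: mod_mod_cancel)

lemma kron_transpose: "transpose_mat (kron A B) = kron (transpose_mat A) (transpose_mat B)"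
  by (rule eq_matI) (auto simp: kron_index dm_bound)

lemma kron_assoc: "kron (kron A B) C = kron A (kron B C)"
proof (rule eq_matI)
  fix i j assume i: "i < dim_row (kron A (kron B C))" and j: "j < dim_col (kron A (kron B C))"
  have i': "i < (dim_row A * dim_row B) * dim_row C" "i < dim_row A * (dim_row B * dim_row C)"
    using i by (auto simp: mult.assoc)
  have j': "j < (dim_col A * dim_col B) * dim_col C" "j < dim_col A * (dim_col B * dim_col C)"
    using j by (auto simp: mult.assoc)
  have a1: "i div dim_row C < dim_row A * dim_row B" "j div dim_col C < dim_col A * dim_col B"
    using dm_bound[OF i'(1)] dm_bound[OF j'(1)] by auto
  have a2: "i mod (dim_row B * dim_row C) < dim_row B * dim_row C" "j mod (dim_col B * dim_col C) < dim_col B * dim_col C"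
    using dm_bound[OF i'(2)] dm_bound[OF j'(2)] by auto
  show "kron (kron A B) C $$ (i, j) = kron A (kron B C) $$ (i, j)"
    using i' j' a1 a2
    by (simp only: kron_index kron_carrier div_mult2' mod_mult_div mod_mult_mod mult.assoc)
qed auto


lemma kron_one_left: "kron (1\<^sub>m 1) A = A"
  by (rule eq_matI) (auto simp: kron_index)

lemma kron_one_left': "kron (1\<^sub>m (Suc 0)) A = A"
  using kron_one_left by simp

lemma kron_one_right: "kron A (1\<^sub>m 1) = A"
  by (rule eq_matI) (auto simp: kron_index)

lemma kron_ones: "kron (1\<^sub>m a) (1\<^sub>m b) = 1\<^sub>m (a * b)"
proof (rule eq_matI)
  fix i j assume i: "i < dim_row (1\<^sub>m (a * b))" and j: "j < dim_col (1\<^sub>m (a * b))"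
  have ib: "i div b < a \<and> i mod b < b" "j div b < a \<and> j mod b < b" using i j dm_bound by auto
  have "(i div b = j div b \<and> i mod b = j mod b) = (i = j)"
    by (metis div_mult_mod_eq)
  then show "kron (1\<^sub>m a) (1\<^sub>m b) $$ (i, j) = 1\<^sub>m (a * b) $$ (i, j)"
    using i j ib by (auto simp: kron_index)
qed auto

lemma kron_list_Nil: "kron_list [] = 1\<^sub>m 1" by (simp add: kron_list_def)
lemma kron_list_Cons: "kron_list (M # Ms) = kron M (kron_list Ms)" by (simp add: kron_list_def)

lemma kron_list_append: "kron_list (xs @ ys) = kron (kron_list xs) (kron_list ys)"
  by (induction xs) (simp_all add: kron_list_Nil kron_list_Cons kron_one_left kron_one_left' kron_assoc)

lemma kron_list_carrier: "set Ms \<subseteq> carrier_mat 2 2 \<Longrightarrow> kron_list Ms \<in> carrier_mat (2 ^ length Ms) (2 ^ length Ms)"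
proof (induction Ms)
  case Nil then show ?case by (simp add: kron_list_Nil)
next
  case (Cons M Ms)
  then have "M \<in> carrier_mat 2 2" "kron_list Ms \<in> carrier_mat (2 ^ length Ms) (2 ^ length Ms)" by auto
  then show ?case unfolding kron_list_Cons using kron_carrier_mat by fastforce
qed

lemma kron_list_ones: "kron_list (replicate k (1\<^sub>m 2)) = 1\<^sub>m (2 ^ k)"
  by (induction k) (simp_all add: kron_list_Nil kron_list_Cons kron_ones)

lemma kron_list_transpose: "transpose_mat (kron_list Ms) = kron_list (map transpose_mat Ms)"
  by (induction Ms) (simp_all add: kron_list_Nil kron_list_Cons kron_transpose)

lemma kron_list_mult_transpose:
  "set Ms \<subseteq> carrier_mat 2 2 \<Longrightarrow>
   kron_list Ms * transpose_mat (kron_list Ms) = kron_list (map (\<lambda>M. M * transpose_mat M) Ms)"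
proof (induction Ms)
  case Nil then show ?case by (simp add: kron_list_Nil)
next
  case (Cons M Ms)
  then have M: "M \<in> carrier_mat 2 2" and S: "set Ms \<subseteq> carrier_mat 2 2" by auto
  have K: "kron_list Ms \<in> carrier_mat (2 ^ length Ms) (2 ^ length Ms)" using kron_list_carrier[OF S] .
  have "kron_list (M # Ms) * transpose_mat (kron_list (M # Ms))
      = kron M (kron_list Ms) * kron (transpose_mat M) (transpose_mat (kron_list Ms))"
    by (simp add: kron_list_Cons kron_transpose)
  also have "\<dots> = kron (M * transpose_mat M) (kron_list Ms * transpose_mat (kron_list Ms))"
    by (rule kron_mult[OF M K]) (use M K in auto)
  also have "\<dots> = kron_list (map (\<lambda>M. M * transpose_mat M) (M # Ms))"
    using Cons.IH[OF S] by (simp add: kron_list_Cons)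
  finally show ?case .
qed

lemma rho_carrier: "rho r \<in> carrier_mat 2 2"
  by (auto simp: rho_def)

definition rhoP :: "nat \<Rightarrow> nat" where
  "rhoP r = (if r \<le> 1 then 0 else if r \<le> 3 then 3 else 4)"

lemma sum2: "(\<Sum>i=0..<(2::nat). f i) = f 0 + (f 1 :: real)"
  by (simp add: numeral_2_eq_2)

lemma rho_mt0: "rho 0 * transpose_mat (rho 0) = rho 0"
  by (rule eq_matI) (auto simp: rho_def scalar_prod_def less_2_cases_iff sum2)

lemma rho_mt1: "rho 1 * transpose_mat (rho 1) = rho 0"
  by (rule eq_matI) (auto simp: rho_def scalar_prod_def less_2_cases_iff sum2)

lemma rho_mt2: "rho 2 * transpose_mat (rho 2) = rho 3"
  by (rule eq_matI) (auto simp: rho_def scalar_prod_def less_2_cases_iff sum2)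

lemma rho_mt3: "rho 3 * transpose_mat (rho 3) = rho 3"
  by (rule eq_matI) (auto simp: rho_def scalar_prod_def less_2_cases_iff sum2)

lemma rho_mt4: "rho 4 * transpose_mat (rho 4) = rho 4"
  by (rule eq_matI) (auto simp: rho_def scalar_prod_def less_2_cases_iff sum2)

lemma rho_mult_transpose: "r \<le> 4 \<Longrightarrow> rho r * transpose_mat (rho r) = rho (rhoP r)"
proof -
  assume r: "r \<le> 4"
  then have "r = 0 \<or> r = 1 \<or> r = 2 \<or> r = 3 \<or> r = 4" by auto
  then show ?thesis
    using rho_mt0 rho_mt1 rho_mt2 rho_mt3 rho_mt4 by (elim disjE) (simp_all add: rhoP_def)
qed

lemma rho0_transpose: "transpose_mat (rho 0) = rho 0"
  by (rule eq_matI) (auto simp: rho_def)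


lemma perm_mult_transpose:
  fixes f :: "nat \<Rightarrow> nat"
  assumes fN: "\<And>i. i < N \<Longrightarrow> f i < N" and inj: "inj_on f {..<N}"
  shows "mat N N (\<lambda>(i,j). if j = f i then 1 else 0) * transpose_mat (mat N N (\<lambda>(i,j). if j = f i then 1 else 0)) = (1\<^sub>m N :: real mat)"
proof (rule eq_matI)
  fix i k assume i: "i < dim_row (1\<^sub>m N :: real mat)" and k: "k < dim_col (1\<^sub>m N :: real mat)"
  then have i': "i < N" and k': "k < N" by auto
  have "(mat N N (\<lambda>(i,j). if j = f i then 1 else 0) * transpose_mat (mat N N (\<lambda>(i,j). if j = f i then 1 else 0))) $$ (i,k)
      = (\<Sum>t\<in>{0..<N}. (if t = f i then 1 else 0) * (if t = f k then 1 else (0::real)))"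
    using i' k' by (simp add: scalar_prod_def)
  also have "\<dots> = (\<Sum>t\<in>{0..<N}. if t = f i then (if f i = f k then 1 else 0) else (0::real))"
    by (rule sum.cong) auto
  also have "\<dots> = (if f i = f k then 1 else 0)"
    using fN[OF i'] by (simp add: sum.delta)
  also have "\<dots> = (1\<^sub>m N :: real mat) $$ (i,k)"
    using i' k' inj by (auto simp: inj_on_def)
  finally show "(mat N N (\<lambda>(i,j). if j = f i then 1 else 0) * transpose_mat (mat N N (\<lambda>(i,j). if j = f i then 1 else 0))) $$ (i,k) = (1\<^sub>m N :: real mat) $$ (i,k)" .
qed auto

lemma perm_mat_mult_transpose:
  assumes "is_perm_mat N P"
  shows "P * transpose_mat P = 1\<^sub>m N"
proof -
  obtain p where p: "p permutes {..<N}" and P: "P = mat N N (\<lambda>(i, j). if j = p i then 1 else 0)"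
    using assms unfolding is_perm_mat_def by blast
  have "\<And>i. i < N \<Longrightarrow> p i < N" using permutes_in_image[OF p] by auto
  moreover have "inj_on p {..<N}" using permutes_inj[OF p] by (auto simp: inj_on_def)
  ultimately show ?thesis unfolding P by (rule perm_mult_transpose)
qed

lemma commutation_mult_transpose:
  assumes a: "a > 0" and b: "b > 0"
  shows "commutation_mat a b * transpose_mat (commutation_mat a b) = 1\<^sub>m (a * b)"
proof -
  define f where "f r = (r mod b) * a + r div b" for r
  have fdiv: "f r div a = r mod b" and fmod: "f r mod a = r div b" if r: "r < a * b" for r
  proof -
    have "r div b < a" using dm_bound[OF r] by simp
    then show "f r div a = r mod b" "f r mod a = r div b"
      unfolding f_def using a by (simp_all add: add.commute)
  qed
  have "\<And>r. r < a * b \<Longrightarrow> f r < a * b"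
  proof -
    fix r assume r: "r < a * b"
    have h: "r div b < a" "r mod b < b" using dm_bound[OF r] by auto
    have "f r < (r mod b) * a + a" unfolding f_def using h by simp
    also have "\<dots> = (r mod b + 1) * a" by simp
    also have "\<dots> \<le> b * a" using h(2) by (intro mult_le_mono1) simp
    finally show "f r < a * b" by (simp add: mult.commute)
  qed
  moreover have "inj_on f {..<a * b}"
  proof (rule inj_onI)
    fix x y assume x: "x \<in> {..<a * b}" and y: "y \<in> {..<a * b}" and e: "f x = f y"
    have "x mod b = y mod b" using fdiv[of x] fdiv[of y] x y e by simp
    moreover have "x div b = y div b" using fmod[of x] fmod[of y] x y e by simp
    ultimately show "x = y" by (metis div_mult_mod_eq)
  qed
  ultimately show ?thesis
    using perm_mult_transpose[of "a * b" f] unfolding commutation_mat_def f_def by simp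
qed

definition okb :: "nat list \<Rightarrow> nat \<Rightarrow> bool" where
  "okb pis x = (\<forall>m<length pis. (pis ! m = 0 \<longrightarrow> x div 2 ^ (length pis - Suc m) mod 2 = 0)
                               \<and> (pis ! m = 3 \<longrightarrow> x div 2 ^ (length pis - Suc m) mod 2 = 1))"

lemma bitmod: "e < k \<Longrightarrow> ((i::nat) mod 2 ^ k) div 2 ^ e mod 2 = i div 2 ^ e mod 2"
proof -
  assume e: "e < k"
  have k: "(2::nat) ^ k = 2 ^ (k - e) * 2 ^ e" using e by (simp flip: power_add)
  have "(i mod 2 ^ k) div 2 ^ e = i div 2 ^ e mod 2 ^ (k - e)"
    unfolding k by (rule mod_mult_div)
  moreover have "(2::nat) dvd 2 ^ (k - e)" using e by simp
  ultimately show ?thesis by (simp add: mod_mod_cancel)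
qed

lemma okb_Cons:
  assumes i: "i < 2 * 2 ^ length ps"
  shows "okb (p # ps) i = ((p = 0 \<longrightarrow> i div 2 ^ length ps = 0) \<and> (p = 3 \<longrightarrow> i div 2 ^ length ps = 1)
                           \<and> okb ps (i mod 2 ^ length ps))"
proof -
  let ?k = "length ps"
  have d: "i div 2 ^ ?k < 2" using dm_bound[OF i] by simp
  then have d2: "i div 2 ^ ?k mod 2 = i div 2 ^ ?k" by simp
  define P where "P m = (((p # ps) ! m = 0 \<longrightarrow> i div 2 ^ (Suc ?k - Suc m) mod 2 = 0)
                               \<and> ((p # ps) ! m = 3 \<longrightarrow> i div 2 ^ (Suc ?k - Suc m) mod 2 = 1))" for m
  have o: "okb (p # ps) i = (\<forall>m<Suc ?k. P m)" unfolding okb_def P_def by simp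
  have sp: "(\<forall>m<Suc ?k. P m) = (P 0 \<and> (\<forall>m<?k. P (Suc m)))"
    by (metis less_Suc_eq_0_disj Suc_less_eq zero_less_Suc)
  have P0: "P 0 = ((p = 0 \<longrightarrow> i div 2 ^ ?k = 0) \<and> (p = 3 \<longrightarrow> i div 2 ^ ?k = 1))"
    unfolding P_def using d2 by simp
  have PS: "P (Suc m) = ((ps ! m = 0 \<longrightarrow> (i mod 2 ^ ?k) div 2 ^ (?k - Suc m) mod 2 = 0)
                               \<and> (ps ! m = 3 \<longrightarrow> (i mod 2 ^ ?k) div 2 ^ (?k - Suc m) mod 2 = 1))"
    if m: "m < ?k" for m
    unfolding P_def using bitmod[of "?k - Suc m" ?k i] m by simp
  have A: "(\<forall>m<?k. P (Suc m)) = okb ps (i mod 2 ^ ?k)"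
    unfolding okb_def using PS by simp
  show ?thesis unfolding o sp P0 A by (rule conj_assoc)
qed

lemma rho_diag: "p \<in> {0, 3, 4} \<Longrightarrow> a < 2 \<Longrightarrow> b < 2 \<Longrightarrow>
  rho p $$ (a, b) = (if a = b \<and> (p = 0 \<longrightarrow> a = 0) \<and> (p = 3 \<longrightarrow> a = 1) then 1 else 0)"
proof -
  assume p: "p \<in> {0, 3, 4}" and a: "a < 2" and b: "b < 2"
  have r0: "rho 0 $$ (a, b) = (if a = b \<and> a = 0 then 1 else 0)"
    using a b by (simp add: rho_def)
  have r3: "rho 3 $$ (a, b) = (if a = b \<and> a = 1 then 1 else 0)"
    using a b by (simp add: rho_def)
  have r4: "rho 4 $$ (a, b) = (if a = b then 1 else 0)"
    using a b by (simp add: rho_def)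
  from p show ?thesis using r0 r3 r4 by (elim insertE emptyE) simp_all
qed

lemma kron_list_diag:
  "set pis \<subseteq> {0, 3, 4} \<Longrightarrow> kron_list (map rho pis)
     = mat (2 ^ length pis) (2 ^ length pis) (\<lambda>(i, j). if i = j \<and> okb pis i then 1 else 0)"
proof (induction pis)
  case Nil
  show ?case by (rule eq_matI) (auto simp: kron_list_Nil okb_def)
next
  case (Cons p ps)
  let ?k = "length ps"
  have IH: "kron_list (map rho ps) = mat (2 ^ ?k) (2 ^ ?k) (\<lambda>(i, j). if i = j \<and> okb ps i then 1 else 0)"
    using Cons by auto
  have p: "p \<in> {0, 3, 4}" using Cons.prems by auto
  show ?case
  proof (rule eq_matI)
    fix i j assume i: "i < dim_row (mat (2 ^ length (p # ps)) (2 ^ length (p # ps)) (\<lambda>(i, j). if i = j \<and> okb (p # ps) i then 1 else (0::real)))"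
      and j: "j < dim_col (mat (2 ^ length (p # ps)) (2 ^ length (p # ps)) (\<lambda>(i, j). if i = j \<and> okb (p # ps) i then 1 else (0::real)))"
    have i': "i < 2 * 2 ^ ?k" and j': "j < 2 * 2 ^ ?k" using i j by auto
    have bi: "i div 2 ^ ?k < 2 \<and> i mod 2 ^ ?k < 2 ^ ?k" using dm_bound[OF i'] .
    have bj: "j div 2 ^ ?k < 2 \<and> j mod 2 ^ ?k < 2 ^ ?k" using dm_bound[OF j'] .
    have eq: "(i div 2 ^ ?k = j div 2 ^ ?k \<and> i mod 2 ^ ?k = j mod 2 ^ ?k) = (i = j)"
      by (metis div_mult_mod_eq)
    have "kron_list (map rho (p # ps)) $$ (i, j) = rho p $$ (i div 2 ^ ?k, j div 2 ^ ?k) *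
        (if i mod 2 ^ ?k = j mod 2 ^ ?k \<and> okb ps (i mod 2 ^ ?k) then 1 else 0)"
      using i' j' bi bj rho_carrier[of p] by (simp add: kron_list_Cons IH kron_index)
    also have "\<dots> = (if i = j \<and> okb (p # ps) i then 1 else 0)"
      using rho_diag[OF p] bi bj eq okb_Cons[OF i', of p] by auto
    finally show "kron_list (map rho (p # ps)) $$ (i, j) = mat (2 ^ length (p # ps)) (2 ^ length (p # ps)) (\<lambda>(i, j). if i = j \<and> okb (p # ps) i then 1 else 0) $$ (i, j)"
      using i' j' by simp
  next
    have "set (map rho (p # ps)) \<subseteq> carrier_mat 2 2" using rho_carrier by auto
    note C = carrier_matD[OF kron_list_carrier[OF this]]
    show "dim_row (kron_list (map rho (p # ps))) = dim_row (mat (2 ^ length (p # ps)) (2 ^ length (p # ps)) (\<lambda>(i, j). if i = j \<and> okb (p # ps) i then 1 else (0::real)))"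
      "dim_col (kron_list (map rho (p # ps))) = dim_col (mat (2 ^ length (p # ps)) (2 ^ length (p # ps)) (\<lambda>(i, j). if i = j \<and> okb (p # ps) i then 1 else (0::real)))"
      by (simp_all only: C dim_row_mat dim_col_mat length_map)
  qed
qed


lemma fire_okb:
  assumes "length pis = n"
  shows "(\<forall>m\<in>{1..n}. case controls_of pis m of None \<Rightarrow> True | Some v \<Rightarrow> (x::nat) div 2 ^ (n - m) mod 2 = v)
         = okb pis x"
proof
  assume H: "\<forall>m\<in>{1..n}. case controls_of pis m of None \<Rightarrow> True | Some v \<Rightarrow> x div 2 ^ (n - m) mod 2 = v"
  show "okb pis x" unfolding okb_def
  proof (intro allI impI)
    fix m assume m: "m < length pis"
    have "Suc m \<in> {1..n}" using m assms by auto
    then have h: "case controls_of pis (Suc m) of None \<Rightarrow> True | Some v \<Rightarrow> x div 2 ^ (n - Suc m) mod 2 = v"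
      using H by blast
    show "(pis ! m = 0 \<longrightarrow> x div 2 ^ (length pis - Suc m) mod 2 = 0) \<and> (pis ! m = 3 \<longrightarrow> x div 2 ^ (length pis - Suc m) mod 2 = 1)"
      using h assms by (auto simp: controls_of_def split: if_splits)
  qed
next
  assume H: "okb pis x"
  show "\<forall>m\<in>{1..n}. case controls_of pis m of None \<Rightarrow> True | Some v \<Rightarrow> x div 2 ^ (n - m) mod 2 = v"
  proof
    fix m assume m: "m \<in> {1..n}"
    then obtain m' where m': "m = Suc m'" "m' < length pis" using assms by (cases m) auto
    have "(pis ! m' = 0 \<longrightarrow> x div 2 ^ (length pis - Suc m') mod 2 = 0) \<and> (pis ! m' = 3 \<longrightarrow> x div 2 ^ (length pis - Suc m') mod 2 = 1)"
      using H m'(2) unfolding okb_def by blast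
    then show "case controls_of pis m of None \<Rightarrow> True | Some v \<Rightarrow> x div 2 ^ (n - m) mod 2 = v"
      using m' assms by (auto simp: controls_of_def)
  qed
qed

lemma halves:
  assumes i: "(i::nat) < 2 * N"
  shows "i < N \<Longrightarrow> i div N = 0 \<and> i mod N = i"
    and "\<not> i < N \<Longrightarrow> i div N = 1 \<and> i mod N = i - N"
proof -
  show "i < N \<Longrightarrow> i div N = 0 \<and> i mod N = i" by simp
  assume n: "\<not> i < N"
  then have N: "N > 0" using i by auto
  have "i - N < N" using i n by auto
  then show "i div N = 1 \<and> i mod N = i - N"
    using le_div_geq[OF N] le_mod_geq[of N i] n by simp
qed

lemma U1_props:
  fixes F :: "nat \<Rightarrow> bool" and N :: nat
  defines "Proj \<equiv> mat N N (\<lambda>(i, j). if i = j \<and> F i then 1 else (0::real))"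
  shows "U1_mat Proj = kron sigma_x Proj + kron (1\<^sub>m 2) (1\<^sub>m (dim_row Proj) - Proj)"
    and "diagonal_mat Proj"
    and "\<forall>i < dim_row Proj. Proj $$ (i, i) \<in> {0, 1}"
proof -
  show "diagonal_mat Proj" unfolding diagonal_mat_def Proj_def by auto
  show "\<forall>i < dim_row Proj. Proj $$ (i, i) \<in> {0, 1}" unfolding Proj_def by auto
  show "U1_mat Proj = kron sigma_x Proj + kron (1\<^sub>m 2) (1\<^sub>m (dim_row Proj) - Proj)"
  proof (rule eq_matI)
    fix i j assume i: "i < dim_row (kron sigma_x Proj + kron (1\<^sub>m 2) (1\<^sub>m (dim_row Proj) - Proj))"
      and j: "j < dim_col (kron sigma_x Proj + kron (1\<^sub>m 2) (1\<^sub>m (dim_row Proj) - Proj))"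
    have i': "i < 2 * N" and j': "j < 2 * N" using i j by (auto simp: Proj_def)
    have sx: "a < 2 \<Longrightarrow> b < 2 \<Longrightarrow> sigma_x $$ (a, b) = (if a \<noteq> b then 1 else 0)" for a b
      by (simp add: sigma_x_def)
    show "U1_mat Proj $$ (i, j) = (kron sigma_x Proj + kron (1\<^sub>m 2) (1\<^sub>m (dim_row Proj) - Proj)) $$ (i, j)"
      using i' j' halves[OF i'] halves[OF j']
      by (cases "i < N"; cases "j < N") (auto simp: U1_mat_def Proj_def kron_index sigma_x_def Let_def)
  qed (auto simp: U1_mat_def Proj_def sigma_x_def Let_def)
qed

lemma U1_mcx:
  assumes "length pis = n"
  defines "Proj \<equiv> mat (2 ^ n) (2 ^ n) (\<lambda>(i, j). if i = j \<and> okb pis i then 1 else (0::real))"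
  shows "U1_mat Proj = mcx_gate n (controls_of pis)"
proof (rule eq_matI)
  fix i j assume i: "i < dim_row (mcx_gate n (controls_of pis))" and j: "j < dim_col (mcx_gate n (controls_of pis))"
  have i': "i < 2 * 2 ^ n" and j': "j < 2 * 2 ^ n" using i j by (auto simp: mcx_gate_def)
  show "U1_mat Proj $$ (i, j) = mcx_gate n (controls_of pis) $$ (i, j)"
    using i' j' halves[OF i'] halves[OF j'] fire_okb[OF assms(1)]
    by (cases "i < 2 ^ n"; cases "j < 2 ^ n") (auto simp: U1_mat_def Proj_def mcx_gate_def Let_def)
qed (auto simp: U1_mat_def Proj_def mcx_gate_def Let_def)


theorem theorem3:
  fixes \<alpha> n_t n_x s j l Q1 n :: nat and rs :: "nat list" and P :: "real mat"
  assumes "\<exists>a. \<alpha> = 2 ^ a" and "\<exists>b. n_t = 2 ^ b"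
    and "n_x = 2 ^ s" and "s \<ge> 1"
    and "1 \<le> j" and "j \<le> \<alpha> - 1" and "l \<le> j - 1"
    and "2 ^ Q1 = \<alpha> * n_t * n_x ^ \<alpha> div n_x ^ (j + 1)"
    and "length rs = Q1" and "\<forall>r\<in>set rs. r \<le> 4"
    and "P \<in> carrier_mat (n_x ^ 2) (n_x ^ 2)" and "is_perm_mat (n_x ^ 2) P"
    and "2 ^ n = \<alpha> * n_t * n_x ^ \<alpha>"
  shows "let Proj = A_mat s n_x j l rs P * transpose_mat (A_mat s n_x j l rs P) in
    \<exists>pis :: nat list. length pis = n \<and> set pis \<subseteq> {0, 3, 4}
      \<and> Proj = kron_list (map rho pis)
      \<and> diagonal_mat Proj \<and> (\<forall>i < dim_row Proj. Proj $$ (i, i) \<in> {0, 1})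
      \<and> U1_mat Proj = kron sigma_x Proj + kron (1\<^sub>m 2) (1\<^sub>m (dim_row Proj) - Proj)
      \<and> U1_mat Proj = mcx_gate n (controls_of pis)
      \<and> card {m \<in> {1..n}. pis ! (m - 1) \<noteq> 4} \<le> n"
  proof -
  obtain a where a: "\<alpha> = 2 ^ a" using assms(1) by blast
  have nx: "n_x = 2 ^ s" by (rule assms(3))
  have nxpos: "n_x > 0" using nx by simp
  have jl: "l + 1 \<le> j" using assms(5,7) by simp
  have ja: "j + 1 \<le> \<alpha>" using assms(5,6) by simp
  have pw0: "n_x ^ (j + 1) * n_x ^ (\<alpha> - (j + 1)) = n_x ^ ((j + 1) + (\<alpha> - (j + 1)))"
    by (rule power_add[symmetric])
  have pw1: "(j + 1) + (\<alpha> - (j + 1)) = \<alpha>" using ja by simp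
  have pw: "n_x ^ \<alpha> = n_x ^ (j + 1) * n_x ^ (\<alpha> - (j + 1))"
    unfolding pw0 pw1 ..
  have "2 ^ Q1 = \<alpha> * n_t * n_x ^ (\<alpha> - (j + 1))"
    using assms(8) nxpos unfolding pw by simp
  then have "2 ^ Q1 * n_x ^ (j + 1) = \<alpha> * n_t * (n_x ^ (j + 1) * n_x ^ (\<alpha> - (j + 1)))"
    by (simp add: mult_ac)
  also have "\<dots> = 2 ^ n" unfolding pw[symmetric] assms(13) ..
  finally have "(2::nat) ^ Q1 * 2 ^ (s * (j + 1)) = 2 ^ n"
    unfolding nx power_mult by simp
  then have "(2::nat) ^ (Q1 + s * (j + 1)) = 2 ^ n" by (simp add: power_add)
  then have len: "Q1 + s * (j + 1) = n" by (simp add: power_inject_exp)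
  define R where "R = kron_list (map rho rs)"
  define S where "S = kron_pow (rho 0) s"
  define K1 where "K1 = commutation_mat (n_x ^ l) n_x"
  define D where "D = kron S (1\<^sub>m n_x)"
  define K2 where "K2 = commutation_mat (n_x ^ 2) (n_x ^ l)"
  define X where "X = kron S K1"
  define Y where "Y = kron (D * P) (1\<^sub>m (n_x ^ l))"
  define M where "M = X * Y * K2"
  define I3 where "I3 = (1\<^sub>m (n_x ^ (j - l - 1)) :: real mat)"
  define T where "T = n_x * (n_x ^ l * n_x)"
  have Adef: "A_mat s n_x j l rs P = kron (kron R M) I3"
    unfolding A_mat_def Let_def R_def M_def X_def Y_def K2_def D_def S_def K1_def I3_def by simp
  have rsc: "set (map rho rs) \<subseteq> carrier_mat 2 2" using rho_carrier by auto
  have cR: "R \<in> carrier_mat (2 ^ Q1) (2 ^ Q1)"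
    using kron_list_carrier[OF rsc] assms(9) unfolding R_def by simp
  have ssc: "set (replicate s (rho 0)) \<subseteq> carrier_mat 2 2" using rho_carrier by auto
  have cS: "S \<in> carrier_mat n_x n_x"
    using kron_list_carrier[OF ssc] nx unfolding S_def kron_pow_def by simp
  have cK1: "K1 \<in> carrier_mat (n_x ^ l * n_x) (n_x ^ l * n_x)"
    unfolding K1_def commutation_mat_def by simp
  have cD: "D \<in> carrier_mat (n_x * n_x) (n_x * n_x)"
    unfolding D_def by (rule kron_carrier_mat[OF cS one_carrier_mat])
  have cP: "P \<in> carrier_mat (n_x * n_x) (n_x * n_x)" using assms(11) by (simp add: power2_eq_square)
  have cDP: "D * P \<in> carrier_mat (n_x * n_x) (n_x * n_x)" using cD cP by simp
  have e1: "n_x * n_x * n_x ^ l = T" unfolding T_def by (simp add: mult_ac)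
  have e2: "n_x ^ 2 * n_x ^ l = T" unfolding T_def by (simp add: mult_ac power2_eq_square)
  have cY: "Y \<in> carrier_mat T T"
    using kron_carrier_mat[OF cDP one_carrier_mat[of "n_x ^ l"]] unfolding Y_def e1 .
  have cX: "X \<in> carrier_mat T T"
    using kron_carrier_mat[OF cS cK1] unfolding X_def T_def .
  have cK2: "K2 \<in> carrier_mat T T"
    unfolding K2_def commutation_mat_def e2 by simp
  have cM: "M \<in> carrier_mat T T" unfolding M_def using cX cY cK2 by simp
  have ST: "transpose_mat S = S"
    unfolding S_def kron_pow_def kron_list_transpose by (simp add: rho0_transpose)
  have SST: "S * transpose_mat S = S"
    unfolding S_def kron_pow_def kron_list_mult_transpose[OF ssc] by (simp add: rho_mt0)
  have SS: "S * S = S" using SST ST by simp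
  have nxl: "n_x ^ l > 0" using nxpos by simp
  have one_carrier_T: "transpose_mat (1\<^sub>m k :: real mat) \<in> carrier_mat k k" for k by simp
  have cST: "transpose_mat S \<in> carrier_mat n_x n_x" using cS by simp
  have cDPT: "transpose_mat (D * P) \<in> carrier_mat (n_x * n_x) (n_x * n_x)" using cDP by simp
  have cK1T: "transpose_mat K1 \<in> carrier_mat (n_x ^ l * n_x) (n_x ^ l * n_x)" using cK1 by simp
  have cRT: "transpose_mat R \<in> carrier_mat (2 ^ Q1) (2 ^ Q1)" using cR by simp
  have cMT: "transpose_mat M \<in> carrier_mat T T" using cM by simp
  have K2K2: "K2 * transpose_mat K2 = 1\<^sub>m T"
    unfolding K2_def using commutation_mult_transpose[of "n_x ^ 2" "n_x ^ l"] nxpos e2 by simp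
  have K1K1: "K1 * transpose_mat K1 = 1\<^sub>m (n_x ^ l * n_x)"
    unfolding K1_def using commutation_mult_transpose[of "n_x ^ l" n_x] nxpos nxl by blast
  have PP: "P * transpose_mat P = 1\<^sub>m (n_x * n_x)"
    using perm_mat_mult_transpose[OF assms(12)] unfolding power2_eq_square .
  have DD: "D * transpose_mat D = D"
  proof -
    have "D * transpose_mat D = kron (S * transpose_mat S) (1\<^sub>m n_x * transpose_mat (1\<^sub>m n_x))"
      unfolding D_def kron_transpose
      by (rule kron_mult[OF cS one_carrier_mat cST one_carrier_T[of n_x] nxpos])
    also have "\<dots> = kron S (1\<^sub>m n_x)"
      unfolding SST transpose_one left_mult_one_mat[OF one_carrier_mat] ..
    finally show ?thesis unfolding D_def .
  qed
  have DPDP: "(D * P) * transpose_mat (D * P) = D"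
  proof -
    have "(D * P) * transpose_mat (D * P) = (D * P) * (transpose_mat P * transpose_mat D)"
      using transpose_mult[OF cD cP] by simp
    also have "\<dots> = D * (P * transpose_mat P) * transpose_mat D"
      using cD cP by (simp add: assoc_mult_mat[of _ "n_x * n_x" "n_x * n_x" _ "n_x * n_x" _ "n_x * n_x"])
    also have "\<dots> = D" using PP cD DD by simp
    finally show ?thesis .
  qed
  have YY: "Y * transpose_mat Y = kron S (1\<^sub>m (n_x ^ l * n_x))"
  proof -
    have "Y * transpose_mat Y = kron ((D * P) * transpose_mat (D * P)) (1\<^sub>m (n_x ^ l) * transpose_mat (1\<^sub>m (n_x ^ l)))"
      unfolding Y_def kron_transpose
      by (rule kron_mult[OF cDP one_carrier_mat cDPT one_carrier_T[of "n_x ^ l"] nxl])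
    also have "\<dots> = kron D (1\<^sub>m (n_x ^ l))" unfolding DPDP by simp
    also have "\<dots> = kron S (1\<^sub>m (n_x ^ l * n_x))"
      unfolding D_def kron_assoc kron_ones by (simp add: mult.commute)
    finally show ?thesis .
  qed
  have MM: "M * transpose_mat M = kron S (1\<^sub>m (n_x ^ l * n_x))"
  proof -
    have cXY: "X * Y \<in> carrier_mat T T" using cX cY by simp
    have MT: "transpose_mat M = transpose_mat K2 * (transpose_mat Y * transpose_mat X)"
      unfolding M_def using transpose_mult[OF cXY cK2] transpose_mult[OF cX cY] by simp
    have cXT: "transpose_mat X \<in> carrier_mat T T" using cX by simp
    have cYT: "transpose_mat Y \<in> carrier_mat T T" using cY by simp
    have cK2T: "transpose_mat K2 \<in> carrier_mat T T" using cK2 by simp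
    have cW: "transpose_mat Y * transpose_mat X \<in> carrier_mat T T" using cXT cYT by simp
    have cW2: "transpose_mat K2 * (transpose_mat Y * transpose_mat X) \<in> carrier_mat T T" using cK2T cW by simp
    have YYX: "(Y * transpose_mat Y) * transpose_mat X = kron S (transpose_mat K1)"
    proof -
      have "(Y * transpose_mat Y) * transpose_mat X = kron (S * transpose_mat S) (1\<^sub>m (n_x ^ l * n_x) * transpose_mat K1)"
        unfolding YY X_def kron_transpose
        by (rule kron_mult[OF cS one_carrier_mat cST cK1T]) (use nxpos in simp)
      then show ?thesis unfolding SST using cK1 by simp
    qed
    have "M * transpose_mat M = (X * Y * K2) * (transpose_mat K2 * (transpose_mat Y * transpose_mat X))"
      unfolding MT unfolding M_def ..
    also have "\<dots> = (X * Y) * (K2 * (transpose_mat K2 * (transpose_mat Y * transpose_mat X)))"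
      by (rule assoc_mult_mat[OF cXY cK2 cW2])
    also have "K2 * (transpose_mat K2 * (transpose_mat Y * transpose_mat X)) = (K2 * transpose_mat K2) * (transpose_mat Y * transpose_mat X)"
      by (rule assoc_mult_mat[OF cK2 cK2T cW, symmetric])
    also have "\<dots> = transpose_mat Y * transpose_mat X"
      unfolding K2K2 by (rule left_mult_one_mat[OF cW])
    also have "(X * Y) * (transpose_mat Y * transpose_mat X) = X * (Y * (transpose_mat Y * transpose_mat X))"
      by (rule assoc_mult_mat[OF cX cY cW])
    also have "Y * (transpose_mat Y * transpose_mat X) = (Y * transpose_mat Y) * transpose_mat X"
      by (rule assoc_mult_mat[OF cY cYT cXT, symmetric])
    also have "\<dots> = kron S (transpose_mat K1)" by (rule YYX)
    also have "X * kron S (transpose_mat K1) = kron (S * S) (K1 * transpose_mat K1)"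
      unfolding X_def by (rule kron_mult[OF cS cK1 cS cK1T]) (use nxpos in simp)
    also have "\<dots> = kron S (1\<^sub>m (n_x ^ l * n_x))" unfolding SS K1K1 ..
    finally show ?thesis .
  qed
  have RR: "R * transpose_mat R = kron_list (map rho (map rhoP rs))"
  proof -
    have "map (\<lambda>M. M * transpose_mat M) (map rho rs) = map rho (map rhoP rs)"
      unfolding map_map
    proof (rule map_cong[OF refl])
      fix r assume "r \<in> set rs"
      then have "r \<le> 4" using assms(10) by blast
      then show "((\<lambda>M. M * transpose_mat M) \<circ> rho) r = (rho \<circ> rhoP) r"
        using rho_mult_transpose by simp
    qed
    note mm = this
    show ?thesis unfolding R_def kron_list_mult_transpose[OF rsc] mm ..
  qed
  have I3pos: "n_x ^ (j - l - 1) > 0" using nxpos by simp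
  have cRM: "kron R M \<in> carrier_mat (2 ^ Q1 * T) (2 ^ Q1 * T)" by (rule kron_carrier_mat[OF cR cM])
  have Tpos: "T > 0" unfolding T_def using nxpos by simp
  have cRMT: "transpose_mat (kron R M) \<in> carrier_mat (2 ^ Q1 * T) (2 ^ Q1 * T)" using cRM by simp
  have AA: "A_mat s n_x j l rs P * transpose_mat (A_mat s n_x j l rs P)
      = kron (kron (kron_list (map rho (map rhoP rs))) (kron S (1\<^sub>m (n_x ^ l * n_x)))) I3"
  proof -
    have "A_mat s n_x j l rs P * transpose_mat (A_mat s n_x j l rs P)
        = kron (kron R M * transpose_mat (kron R M)) (I3 * transpose_mat I3)"
      unfolding Adef kron_transpose[of "kron R M" I3]
      unfolding I3_def by (rule kron_mult[OF cRM one_carrier_mat cRMT one_carrier_T[of "n_x ^ (j - l - 1)"] I3pos])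
    also have "kron R M * transpose_mat (kron R M) = kron (R * transpose_mat R) (M * transpose_mat M)"
      unfolding kron_transpose by (rule kron_mult[OF cR cM cRT cMT Tpos])
    finally show ?thesis unfolding RR MM I3_def by simp
  qed
  define pis where "pis = map rhoP rs @ replicate s 0 @ replicate (s * (l + 1)) 4 @ replicate (s * (j - l - 1)) 4"
  have ones: "1\<^sub>m (2 ^ k) = kron_list (map rho (replicate k 4))" for k
    using kron_list_ones[of k] by (simp add: rho_def)
  have o1: "1\<^sub>m (n_x ^ l * n_x) = kron_list (map rho (replicate (s * (l + 1)) 4))"
  proof -
    have q1: "n_x ^ l * n_x = 2 ^ (s * (l + 1))"
      unfolding nx power_mult[symmetric] power_add[symmetric] by (simp add: algebra_simps)
    show ?thesis unfolding q1 by (rule ones)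
  qed
  have o2: "I3 = kron_list (map rho (replicate (s * (j - l - 1)) 4))"
  proof -
    have q2: "n_x ^ (j - l - 1) = 2 ^ (s * (j - l - 1))"
      unfolding nx power_mult[symmetric] ..
    show ?thesis unfolding I3_def q2 by (rule ones)
  qed
  have S': "S = kron_list (map rho (replicate s 0))" unfolding S_def kron_pow_def by simp
  have ProjEq: "A_mat s n_x j l rs P * transpose_mat (A_mat s n_x j l rs P) = kron_list (map rho pis)"
    unfolding AA o1 o2 S' pis_def by (simp add: kron_list_append kron_assoc)
  have lenp: "length pis = n"
  proof -
    have "s + s * (l + 1) + s * (j - l - 1) = s * (j + 1)"
    proof -
      have h0: "(l + 1) + (j - l - 1) = j" using jl by simp
      have h: "s * (l + 1) + s * (j - l - 1) = s * j"
        using add_mult_distrib2[of s "l + 1" "j - l - 1"] h0 by simp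
      then show ?thesis by simp
    qed
    then show ?thesis unfolding pis_def using len assms(9) by simp
  qed
  have setp: "set pis \<subseteq> {0, 3, 4}" unfolding pis_def by (auto simp: rhoP_def)
  have ProjMat: "A_mat s n_x j l rs P * transpose_mat (A_mat s n_x j l rs P)
     = mat (2 ^ n) (2 ^ n) (\<lambda>(i, j). if i = j \<and> okb pis i then 1 else 0)"
    unfolding ProjEq kron_list_diag[OF setp] lenp ..
  have card: "card {m \<in> {1..n}. pis ! (m - 1) \<noteq> 4} \<le> n"
  proof -
    have "{m \<in> {1..n}. pis ! (m - 1) \<noteq> 4} \<subseteq> {1..n}" by blast
    then have "card {m \<in> {1..n}. pis ! (m - 1) \<noteq> 4} \<le> card {1..n}"
      by (rule card_mono[OF finite_atLeastAtMost])
    then show ?thesis by simp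
  qed
  have KL: "mat (2 ^ n) (2 ^ n) (\<lambda>(i, j). if i = j \<and> okb pis i then 1 else 0) = kron_list (map rho pis)"
    using ProjEq ProjMat by simp
  note U = U1_props[where F="okb pis" and N="2 ^ n"]
  show ?thesis
    unfolding Let_def ProjMat
  proof (intro exI[of _ pis] conjI)
    show "length pis = n" by (rule lenp)
    show "set pis \<subseteq> {0, 3, 4}" by (rule setp)
  qed (rule KL U(1) U(2) U(3) U1_mcx[OF lenp] card)+
qed

end
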